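(* Let $\mathcal{H}$ be a hypertree, $B$ a basic set of $\mathcal{H}$, and $u,v$ two different elements of $B$. Then [$I_\mathcal{H}(uv)=B$ and $uv$ is an edge of some host tree of $\mathcal{H}$] if and only if $u$ and $v$ lie in two different connected components of the 2-section of $\overline{\mathcal{H}_B}$.
   Context: A hypergraph $\mathcal{H}$ has a finite vertex set $V(\mathcal{H})$ and a finite family of nonempty subsets (edges). A host tree is a tree on $V(\mathcal{H})$ in which every edge induces a connected subgraph; a hypertree is a hypergraph with a host tree. For $V'\subseteq V(\mathcal{H})$, $I_\mathcal{H}(V')$ is the intersection of all edges containing $V'$, or $V(\mathcal{H})$ if none does; $I_\mathcal{H}(uv)=I_\mathcal{H}(\{u,v\})$. For $A\subseteq V(\mathcal{H})$, $\overline{\mathcal{H}_A}$ is the hypergraph on $V(\mathcal{H})$ whose edges are the edges of $\mathcal{H}$ not containing $A$. The 2-section of a hypergraph is the graph on its vertices where two distinct vertices are adjacent iff some edge contains both. A union of sets is connected if the intersection graph of the sets is connected. $Comp(\mathcal{H})$ is the hypergraph without repeated edges on $V(\mathcal{H})$ whose edges are $V(\mathcal{H})$, all singletons, and all proper subsets obtainable from edges of $\mathcal{H}$ by repeated nonempty intersections and connected unions; a basic set of $\mathcal{H}$ is an edge of $Comp(\mathcal{H})$ with more than one vertex that is not a connected union of strictly smaller edges of $Comp(\mathcal{H})$. *)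

theory Defs
  imports Main
begin

(* Hypergraph: vertex set V (finite), edges E (finite family of nonempty subsets of V).
   Repeated edges are irrelevant for all notions below, so E is a set of sets. *)
definition hypergraph :: "'a set \<Rightarrow> 'a set set \<Rightarrow> bool" where
  "hypergraph V E \<longleftrightarrow> finite V \<and> finite E \<and> (\<forall>e\<in>E. e \<noteq> {} \<and> e \<subseteq> V)"

definition connected_on :: "'b set \<Rightarrow> ('b \<Rightarrow> 'b \<Rightarrow> bool) \<Rightarrow> bool" where
  "connected_on S R \<longleftrightarrow>
     (\<forall>x\<in>S. \<forall>y\<in>S. (\<lambda>a b. a \<in> S \<and> b \<in> S \<and> R a b)\<^sup>*\<^sup>* x y)"

definition adj :: "'a set set \<Rightarrow> 'a \<Rightarrow> 'a \<Rightarrow> bool" where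
  "adj T x y \<longleftrightarrow> x \<noteq> y \<and> {x, y} \<in> T"

definition has_cycle :: "'a set set \<Rightarrow> bool" where
  "has_cycle T \<longleftrightarrow> (\<exists>xs. length xs \<ge> 3 \<and> distinct xs \<and>
      (\<forall>i. Suc i < length xs \<longrightarrow> adj T (xs ! i) (xs ! Suc i)) \<and> adj T (last xs) (hd xs))"

definition is_tree :: "'a set \<Rightarrow> 'a set set \<Rightarrow> bool" where
  "is_tree V T \<longleftrightarrow> V \<noteq> {} \<and> (\<forall>e\<in>T. e \<subseteq> V \<and> card e = 2) \<and>
      connected_on V (adj T) \<and> \<not> has_cycle T"

definition host_tree :: "'a set \<Rightarrow> 'a set set \<Rightarrow> 'a set set \<Rightarrow> bool" where
  "host_tree V E T \<longleftrightarrow> is_tree V T \<and> (\<forall>e\<in>E. connected_on e (adj T))"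

definition hypertree :: "'a set \<Rightarrow> 'a set set \<Rightarrow> bool" where
  "hypertree V E \<longleftrightarrow> hypergraph V E \<and> (\<exists>T. host_tree V E T)"

definition I_H :: "'a set \<Rightarrow> 'a set set \<Rightarrow> 'a set \<Rightarrow> 'a set" where
  "I_H V E V' = (if \<exists>e\<in>E. V' \<subseteq> e then \<Inter>{e\<in>E. V' \<subseteq> e} else V)"

(* edges of overline(H_A) *)
definition edges_not_containing :: "'a set set \<Rightarrow> 'a set \<Rightarrow> 'a set set" where
  "edges_not_containing E A = {e \<in> E. \<not> A \<subseteq> e}"

definition two_section_adj :: "'a set set \<Rightarrow> 'a \<Rightarrow> 'a \<Rightarrow> bool" where
  "two_section_adj E x y \<longleftrightarrow> x \<noteq> y \<and> (\<exists>e\<in>E. x \<in> e \<and> y \<in> e)"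

definition same_component :: "'a set \<Rightarrow> 'a set set \<Rightarrow> 'a \<Rightarrow> 'a \<Rightarrow> bool" where
  "same_component V E x y \<longleftrightarrow>
     (\<lambda>a b. a \<in> V \<and> b \<in> V \<and> two_section_adj E a b)\<^sup>*\<^sup>* x y"

definition connected_family :: "'a set set \<Rightarrow> bool" where
  "connected_family F \<longleftrightarrow> connected_on F (\<lambda>A B. A \<noteq> B \<and> A \<inter> B \<noteq> {})"

inductive_set comp_closure :: "'a set set \<Rightarrow> 'a set set" for E where
  base: "e \<in> E \<Longrightarrow> e \<in> comp_closure E"
| inter: "A \<in> comp_closure E \<Longrightarrow> B \<in> comp_closure E \<Longrightarrow> A \<inter> B \<noteq> {} \<Longrightarrow>
          A \<inter> B \<in> comp_closure E"
| union: "(\<And>X. X \<in> F \<Longrightarrow> X \<in> comp_closure E) \<Longrightarrow> finite F \<Longrightarrow> F \<noteq> {} \<Longrightarrow> connected_family F \<Longrightarrow>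
          \<Union>F \<in> comp_closure E"

definition Comp :: "'a set \<Rightarrow> 'a set set \<Rightarrow> 'a set set" where
  "Comp V E = {V} \<union> {{x} | x. x \<in> V} \<union> {X \<in> comp_closure E. X \<subset> V}"

definition basic_set :: "'a set \<Rightarrow> 'a set set \<Rightarrow> 'a set \<Rightarrow> bool" where
  "basic_set V E B \<longleftrightarrow> B \<in> Comp V E \<and> card B > 1 \<and>
     \<not> (\<exists>F. F \<subseteq> Comp V E \<and> (\<forall>X\<in>F. X \<subset> B) \<and> F \<noteq> {} \<and> connected_family F \<and> \<Union>F = B)"

end

theory Submission
  imports Defs "HOL-Library.Transitive_Closure_Table"
begin

definition reach :: "'a set set \<Rightarrow> 'a \<Rightarrow> 'a \<Rightarrow> bool" where
  "reach G = (adj G)\<^sup>*\<^sup>*"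

definition restr :: "'a set \<Rightarrow> ('a \<Rightarrow> 'a \<Rightarrow> bool) \<Rightarrow> 'a \<Rightarrow> 'a \<Rightarrow> bool" where
  "restr S R = (\<lambda>a b. a \<in> S \<and> b \<in> S \<and> R a b)"

lemma conn_def2: "connected_on S R \<longleftrightarrow> (\<forall>x\<in>S. \<forall>y\<in>S. (restr S R)\<^sup>*\<^sup>* x y)"
  unfolding connected_on_def restr_def by simp

lemma adj_sym: "adj G x y \<Longrightarrow> adj G y x"
  unfolding adj_def by (auto simp add: insert_commute)

lemma adj_minus: "adj (G - {e}) x y \<longleftrightarrow> adj G x y \<and> {x,y} \<noteq> e"
  unfolding adj_def by auto

lemma adj_mono: "G \<subseteq> H \<Longrightarrow> adj G x y \<Longrightarrow> adj H x y"
  unfolding adj_def by auto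

lemma rtranclp_lift:
  assumes "\<And>a b. r a b \<Longrightarrow> s\<^sup>*\<^sup>* a b" "r\<^sup>*\<^sup>* x y"
  shows "s\<^sup>*\<^sup>* x y"
  using assms(2)
proof (induct rule: rtranclp_induct)
  case base then show ?case by simp
next
  case (step y z) then show ?case using assms(1) rtranclp_trans by metis
qed

lemma rtranclp_sym:
  assumes "\<And>a b. r a b \<Longrightarrow> r b a" "r\<^sup>*\<^sup>* x y"
  shows "r\<^sup>*\<^sup>* y x"
  using assms(2)
proof (induct rule: rtranclp_induct)
  case base then show ?case by simp
next
  case (step y z) then show ?case using assms(1)
    by (meson converse_rtranclp_into_rtranclp)
qed

lemma reach_sym: "reach G x y \<Longrightarrow> reach G y x"
  unfolding reach_def by (rule rtranclp_sym[OF adj_sym])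

lemma reach_trans: "reach G x y \<Longrightarrow> reach G y z \<Longrightarrow> reach G x z"
  unfolding reach_def by (rule rtranclp_trans)

lemma reach_step: "reach G x y \<Longrightarrow> adj G y z \<Longrightarrow> reach G x z"
  unfolding reach_def by (rule rtranclp.rtrancl_into_rtrancl)

lemma reach_edge: "adj G y z \<Longrightarrow> reach G y z"
  unfolding reach_def by simp

lemma reach_mono: "G \<subseteq> H \<Longrightarrow> reach G x y \<Longrightarrow> reach H x y"
  unfolding reach_def by (rule rtranclp_lift[where r="adj G"]) (auto intro: adj_mono)

lemma restr_sym: "(\<And>a b. R a b \<Longrightarrow> R b a) \<Longrightarrow> (restr S R)\<^sup>*\<^sup>* x y \<Longrightarrow> (restr S R)\<^sup>*\<^sup>* y x"
  by (rule rtranclp_sym) (auto simp: restr_def)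

lemma restr_mono: "S \<subseteq> S' \<Longrightarrow> (\<And>a b. a \<in> S \<Longrightarrow> b \<in> S \<Longrightarrow> R a b \<Longrightarrow> R' a b) \<Longrightarrow>
   (restr S R)\<^sup>*\<^sup>* x y \<Longrightarrow> (restr S' R')\<^sup>*\<^sup>* x y"
  by (rule rtranclp_lift[where r="restr S R"]) (auto simp: restr_def)

lemma cross:
  assumes "r\<^sup>*\<^sup>* a b" "P a" "\<not> P b"
  shows "\<exists>x y. r x y \<and> P x \<and> \<not> P y"
  using assms by (induct rule: rtranclp_induct) auto

lemma crossing:
  assumes "(restr S (adj T))\<^sup>*\<^sup>* a b" "reach (T - {{p,q}}) p a" "\<not> reach (T - {{p,q}}) p b"
  shows "p \<in> S \<and> q \<in> S"
proof -
  obtain x y where xy: "restr S (adj T) x y" "reach (T - {{p,q}}) p x" "\<not> reach (T - {{p,q}}) p y"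
    using cross[OF assms(1), of "reach (T - {{p,q}}) p"] assms(2,3) by blast
  show ?thesis
  proof (cases "{x,y} = {p,q}")
    case True
    then show ?thesis using xy(1) unfolding restr_def by (auto simp: doubleton_eq_iff)
  next
    case False
    then have "adj (T - {{p,q}}) x y" using xy(1) by (simp add: adj_minus restr_def)
    then have "reach (T - {{p,q}}) p y" by (rule reach_step[OF xy(2)])
    then show ?thesis using xy(3) by blast
  qed
qed

lemma bridge:
  assumes "\<not> has_cycle T" "{p,q} \<in> T" "p \<noteq> q"
  shows "\<not> reach (T - {{p,q}}) p q"
proof
  assume "reach (T - {{p,q}}) p q"
  then obtain zs where "rtrancl_path (adj (T - {{p,q}})) p zs q"
    unfolding reach_def rtranclp_eq_rtrancl_path by blast
  then obtain zs' where P: "rtrancl_path (adj (T - {{p,q}})) p zs' q" and D: "distinct (p # zs')"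
    by (rule rtrancl_path_distinct)
  have ne: "zs' \<noteq> []" using P assms(3) by (cases rule: rtrancl_path.cases) auto
  have l: "last zs' = q" using rtrancl_path_last[OF P ne] .
  have "length zs' \<ge> 2"
  proof (rule ccontr)
    assume "\<not> length zs' \<ge> 2"
    then obtain z where "zs' = [z]" using ne by (cases zs'; cases "tl zs'") auto
    then have "adj (T - {{p,q}}) p q" using P l by (auto elim: rtrancl_path.cases)
    then show False by (simp add: adj_minus)
  qed
  have "has_cycle T"
    unfolding has_cycle_def
  proof (intro exI conjI allI impI)
    show "3 \<le> length (p # zs')" using \<open>length zs' \<ge> 2\<close> by simp
    show "distinct (p # zs')" by fact
    fix i assume "Suc i < length (p # zs')"
    then have "adj (T - {{p,q}}) ((p # zs') ! i) (zs' ! i)" using rtrancl_path_nth[OF P] by simp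
    then show "adj T ((p # zs') ! i) ((p # zs') ! Suc i)" by (simp add: adj_minus)
  next
    show "adj T (last (p # zs')) (hd (p # zs'))" using l ne assms(2,3)
      by (simp add: adj_def insert_commute)
  qed
  then show False using assms(1) by simp
qed

lemma acyclic_if_bridges:
  assumes "\<And>p q. {p,q} \<in> T \<Longrightarrow> p \<noteq> q \<Longrightarrow> \<not> reach (T - {{p,q}}) p q"
  shows "\<not> has_cycle T"
proof
  assume "has_cycle T"
  then obtain xs where L: "length xs \<ge> 3" and D: "distinct xs"
    and A: "\<forall>i. Suc i < length xs \<longrightarrow> adj T (xs ! i) (xs ! Suc i)"
    and C: "adj T (last xs) (hd xs)"
    unfolding has_cycle_def by blast
  define n where "n = length xs"
  define p where "p = last xs"
  define q where "q = hd xs"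
  have pn: "p = xs ! (n - 1)" unfolding p_def n_def using L by (subst last_conv_nth) auto
  have qn: "q = xs ! 0" unfolding q_def using L by (subst hd_conv_nth) auto
  have pq: "p \<noteq> q" "{p,q} \<in> T" using C unfolding adj_def p_def q_def by auto
  have "j < n \<Longrightarrow> reach (T - {{p,q}}) q (xs ! j)" for j
  proof (induct j)
    case 0 then show ?case using qn by (simp add: reach_def)
  next
    case (Suc j)
    have a: "adj T (xs ! j) (xs ! Suc j)" using A Suc(2) n_def by simp
    have "{xs ! j, xs ! Suc j} \<noteq> {p, q}"
    proof
      assume eq: "{xs ! j, xs ! Suc j} = {p, q}"
      have i1: "xs ! j = xs ! (n - 1) \<or> xs ! j = xs ! 0" using eq pn qn by blast
      have i2: "xs ! Suc j = xs ! (n - 1) \<or> xs ! Suc j = xs ! 0" using eq pn qn by blast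
      have "j < n" "n - 1 < n" "0 < n" using Suc(2) L by auto
      then have "j = n - 1 \<or> j = 0" using i1 D n_def nth_eq_iff_index_eq by metis
      then have j0: "j = 0" using Suc(2) by auto
      have "Suc j = n - 1 \<or> Suc j = 0" using i2 D \<open>n - 1 < n\<close> \<open>0 < n\<close> Suc(2) n_def nth_eq_iff_index_eq by metis
      then show False using j0 L n_def by auto
    qed
    then have a2: "adj (T - {{p,q}}) (xs ! j) (xs ! Suc j)" using a by (simp add: adj_minus)
    have "j < n" using Suc(2) by linarith
    then have "reach (T - {{p,q}}) q (xs ! j)" by (rule Suc(1))
    then show ?case using a2 by (rule reach_step)
  qed
  moreover have "n - 1 < n" using L n_def by simp
  ultimately have "reach (T - {{p,q}}) q (xs ! (n - 1))" by blast
  then have "reach (T - {{p,q}}) p q" unfolding pn[symmetric] by (rule reach_sym)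
  then show False using assms[OF pq(2,1)] by blast
qed


lemma avoid:
  assumes "rtrancl_path (adj T) a zs b" "c \<notin> set (a # zs)"
  shows "reach (T - {{c,d}}) a b"
  using assms
proof (induct rule: rtrancl_path.induct)
  case (base x) then show ?case by (simp add: reach_def)
next
  case (step x y ys z)
  have "adj (T - {{c,d}}) x y" using step(1,4) by (auto simp: adj_minus)
  moreover have "reach (T - {{c,d}}) y z" using step(3,4) by simp
  ultimately show ?case unfolding reach_def by (rule converse_rtranclp_into_rtranclp)
qed

lemma simple_path_in:
  assumes nc: "\<not> has_cycle T" and P: "rtrancl_path (adj T) a zs b" and D: "distinct (a # zs)"
    and S: "connected_on S (adj T)" and ab: "a \<in> S" "b \<in> S"
  shows "set zs \<subseteq> S"
  using P D ab
proof (induct rule: rtrancl_path.induct)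
  case (base x) then show ?case by simp
next
  case (step x y ys z)
  have xy: "x \<noteq> y" "{x,y} \<in> T" using step(1) unfolding adj_def by auto
  have r1: "reach (T - {{x,y}}) y z"
    using avoid[OF step(2), of x y] step(4) by simp
  have "\<not> reach (T - {{x,y}}) x z"
  proof
    assume "reach (T - {{x,y}}) x z"
    then have "reach (T - {{x,y}}) x y" using r1 reach_sym reach_trans by metis
    then show False using bridge[OF nc xy(2,1)] by simp
  qed
  moreover have "(restr S (adj T))\<^sup>*\<^sup>* x z" using S step(5,6) unfolding conn_def2 by blast
  ultimately have "y \<in> S" using crossing[of S T x z x y] by (simp add: reach_def)
  then have "set ys \<subseteq> S" using step(3,4,6) by simp
  then show ?case using \<open>y \<in> S\<close> by simp
qed

lemma path_restr:
  assumes "rtrancl_path r a zs b" "set (a # zs) \<subseteq> S"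
  shows "(restr S r)\<^sup>*\<^sup>* a b"
  using assms
proof (induct rule: rtrancl_path.induct)
  case (base x) then show ?case by simp
next
  case (step x y ys z)
  have "restr S r x y" using step(1,4) by (simp add: restr_def)
  moreover have "(restr S r)\<^sup>*\<^sup>* y z" using step(3,4) by simp
  ultimately show ?case by (rule converse_rtranclp_into_rtranclp)
qed

lemma restr_simple_path:
  assumes "(restr S r)\<^sup>*\<^sup>* a b"
  obtains zs where "rtrancl_path r a zs b" "distinct (a # zs)" "set zs \<subseteq> S"
proof -
  obtain zs where "rtrancl_path (restr S r) a zs b"
    using assms unfolding rtranclp_eq_rtrancl_path by blast
  then obtain zs' where P: "rtrancl_path (restr S r) a zs' b" "distinct (a # zs')"
    by (rule rtrancl_path_distinct)
  have "set zs' \<subseteq> S"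
  proof
    fix z assume "z \<in> set zs'"
    then have "Rangep (restr S r) z" by (rule rtrancl_path_Range[OF P(1)])
    then show "z \<in> S" by (auto simp: restr_def)
  qed
  moreover have "rtrancl_path r a zs' b"
    using P(1) by (rule rtrancl_path_mono) (simp add: restr_def)
  ultimately show ?thesis using that P(2) by blast
qed

lemma conn_inter:
  assumes nc: "\<not> has_cycle T" and S1: "connected_on S1 (adj T)" and S2: "connected_on S2 (adj T)"
  shows "connected_on (S1 \<inter> S2) (adj T)"
  unfolding conn_def2
proof (intro ballI)
  fix a b assume ab: "a \<in> S1 \<inter> S2" "b \<in> S1 \<inter> S2"
  then have "(restr S1 (adj T))\<^sup>*\<^sup>* a b" using S1 unfolding conn_def2 by blast
  then obtain zs where P: "rtrancl_path (adj T) a zs b" "distinct (a # zs)" "set zs \<subseteq> S1"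
    by (rule restr_simple_path)
  have "set zs \<subseteq> S2" using simple_path_in[OF nc P(1,2) S2] ab by blast
  then have "set (a # zs) \<subseteq> S1 \<inter> S2" using P(3) ab by auto
  then show "(restr (S1 \<inter> S2) (adj T))\<^sup>*\<^sup>* a b" by (rule path_restr[OF P(1)])
qed

definition famrel :: "'a set \<Rightarrow> 'a set \<Rightarrow> bool" where
  "famrel A B \<longleftrightarrow> A \<noteq> B \<and> A \<inter> B \<noteq> {}"

lemma cf_def2: "connected_family F \<longleftrightarrow> (\<forall>X\<in>F. \<forall>Y\<in>F. (restr F famrel)\<^sup>*\<^sup>* X Y)"
  unfolding connected_family_def conn_def2 famrel_def by simp

lemma fam_step: "A \<in> F \<Longrightarrow> B \<in> F \<Longrightarrow> z \<in> A \<Longrightarrow> z \<in> B \<Longrightarrow> (restr F famrel)\<^sup>*\<^sup>* A B"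
  by (cases "A = B") (auto simp: restr_def famrel_def intro!: r_into_rtranclp)

lemma family_edge:
  assumes nc: "\<not> has_cycle T" and F: "connected_family F"
    and C: "\<forall>A\<in>F. connected_on A (adj T)" and pq: "{p,q} \<in> T" "p \<noteq> q"
    and p: "p \<in> \<Union>F" and q: "q \<in> \<Union>F"
  shows "\<exists>A\<in>F. p \<in> A \<and> q \<in> A"
proof (rule ccontr)
  assume N: "\<not> (\<exists>A\<in>F. p \<in> A \<and> q \<in> A)"
  define P where "P = (\<lambda>z. reach (T - {{p,q}}) p z)"
  have side: "\<forall>y\<in>A. P y" if "A \<in> F" "x \<in> A" "P x" for A x
  proof
    fix y assume "y \<in> A"
    show "P y"
    proof (rule ccontr)
      assume "\<not> P y"
      have "(restr A (adj T))\<^sup>*\<^sup>* x y" using C that(1,2) \<open>y \<in> A\<close> unfolding conn_def2 by blast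
      then have "p \<in> A \<and> q \<in> A" using that(3) \<open>\<not> P y\<close> unfolding P_def by (rule crossing)
      then show False using N that(1) by blast
    qed
  qed
  obtain A1 where A1: "A1 \<in> F" "p \<in> A1" using p by blast
  obtain A2 where A2: "A2 \<in> F" "q \<in> A2" using q by blast
  have w: "(restr F famrel)\<^sup>*\<^sup>* A1 A2" using F A1 A2 unfolding cf_def2 by blast
  define Q where "Q = (\<lambda>A. A \<in> F \<and> (\<forall>y\<in>A. P y))"
  have QA1: "Q A1" unfolding Q_def using side[OF A1(1) A1(2)] A1(1) by (simp add: P_def reach_def)
  have "Q A2"
  proof (rule ccontr)
    assume "\<not> Q A2"
    then obtain X Y where XY: "restr F famrel X Y" "Q X" "\<not> Q Y" using cross[OF w, of Q] QA1 by blast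
    then obtain z where "z \<in> X" "z \<in> Y" "Y \<in> F" by (auto simp: restr_def famrel_def)
    then have "P z" using XY(2) unfolding Q_def by blast
    then have "Q Y" using side[OF \<open>Y \<in> F\<close> \<open>z \<in> Y\<close>] \<open>Y \<in> F\<close> unfolding Q_def by blast
    then show False using XY(3) by blast
  qed
  then have "P q" using A2 unfolding Q_def by blast
  then show False using bridge[OF nc pq] unfolding P_def by blast
qed

lemma family_from_cover:
  assumes S: "connected_on S (adj T)" and U: "\<Union>G = S" and ne: "\<forall>g\<in>G. g \<noteq> {}"
    and cov: "\<And>p q. p \<in> S \<Longrightarrow> q \<in> S \<Longrightarrow> adj T p q \<Longrightarrow> \<exists>g\<in>G. p \<in> g \<and> q \<in> g"
  shows "connected_family G"
  unfolding cf_def2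
proof (intro ballI)
  fix g1 g2 assume g: "g1 \<in> G" "g2 \<in> G"
  obtain p where p: "p \<in> g1" using ne g by blast
  obtain q where q: "q \<in> g2" using ne g by blast
  have "(restr S (adj T))\<^sup>*\<^sup>* p q" using S p q g U unfolding conn_def2 by blast
  then have "\<forall>g\<in>G. q \<in> g \<longrightarrow> (restr G famrel)\<^sup>*\<^sup>* g1 g"
  proof (induct rule: rtranclp_induct)
    case base
    then show ?case using fam_step[OF g(1) _ p] by blast
  next
    case (step y z)
    then obtain g0 where g0: "g0 \<in> G" "y \<in> g0" "z \<in> g0" using cov unfolding restr_def by blast
    then have "(restr G famrel)\<^sup>*\<^sup>* g1 g0" using step(3) by blast
    then show ?case using fam_step[OF g0(1) _ g0(3)] rtranclp_trans by metis
  qed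
  then show "(restr G famrel)\<^sup>*\<^sup>* g1 g2" using g(2) q by blast
qed

lemma conn_union:
  assumes F: "connected_family F" and C: "\<forall>A\<in>F. connected_on A (adj T)"
  shows "connected_on (\<Union>F) (adj T)"
  unfolding conn_def2
proof (intro ballI)
  fix a b assume "a \<in> \<Union>F" "b \<in> \<Union>F"
  then obtain X1 X2 where X: "X1 \<in> F" "a \<in> X1" "X2 \<in> F" "b \<in> X2" by blast
  have "(restr F famrel)\<^sup>*\<^sup>* X1 X2" using F X unfolding cf_def2 by blast
  then have "X2 \<in> F \<longrightarrow> (\<forall>z\<in>X2. (restr (\<Union>F) (adj T))\<^sup>*\<^sup>* a z)"
  proof (induct rule: rtranclp_induct)
    case base
    show ?case
    proof (intro impI ballI)
      fix z assume "z \<in> X1"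
      then have "(restr X1 (adj T))\<^sup>*\<^sup>* a z" using C X unfolding conn_def2 by blast
      then show "(restr (\<Union>F) (adj T))\<^sup>*\<^sup>* a z" by (rule restr_mono[rotated 2]) (use X in auto)
    qed
  next
    case (step Y Z)
    then obtain w where w: "w \<in> Y" "w \<in> Z" "Y \<in> F" "Z \<in> F" by (auto simp: restr_def famrel_def)
    have aw: "(restr (\<Union>F) (adj T))\<^sup>*\<^sup>* a w" using step(3) w by blast
    show ?case
    proof (intro impI ballI)
      fix z assume "z \<in> Z"
      then have "(restr Z (adj T))\<^sup>*\<^sup>* w z" using C w unfolding conn_def2 by blast
      then have "(restr (\<Union>F) (adj T))\<^sup>*\<^sup>* w z" by (rule restr_mono[rotated 2]) (use w in auto)
      then show "(restr (\<Union>F) (adj T))\<^sup>*\<^sup>* a z" using aw by (rule rtranclp_trans[rotated])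
    qed
  qed
  then show "(restr (\<Union>F) (adj T))\<^sup>*\<^sup>* a b" using X by blast
qed

lemma family_union:
  assumes F: "connected_family F"
    and H: "\<And>X. X \<in> F \<Longrightarrow> connected_family (\<Phi> X) \<and> \<Union>(\<Phi> X) = X"
  shows "connected_family (\<Union>X\<in>F. \<Phi> X)"
  unfolding cf_def2
proof (intro ballI)
  let ?G = "\<Union>X\<in>F. \<Phi> X"
  fix g1 g2 assume "g1 \<in> ?G" "g2 \<in> ?G"
  then obtain X1 X2 where X: "X1 \<in> F" "g1 \<in> \<Phi> X1" "X2 \<in> F" "g2 \<in> \<Phi> X2" by blast
  have "(restr F famrel)\<^sup>*\<^sup>* X1 X2" using F X unfolding cf_def2 by blast
  then have "X2 \<in> F \<longrightarrow> (\<forall>g\<in>\<Phi> X2. (restr ?G famrel)\<^sup>*\<^sup>* g1 g)"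
  proof (induct rule: rtranclp_induct)
    case base
    show ?case
    proof (intro impI ballI)
      fix g assume "g \<in> \<Phi> X1"
      then have "(restr (\<Phi> X1) famrel)\<^sup>*\<^sup>* g1 g" using H[OF X(1)] X unfolding cf_def2 by blast
      then show "(restr ?G famrel)\<^sup>*\<^sup>* g1 g" by (rule restr_mono[rotated 2]) (use X in auto)
    qed
  next
    case (step Y Z)
    then obtain w where w: "w \<in> Y" "w \<in> Z" "Y \<in> F" "Z \<in> F" by (auto simp: restr_def famrel_def)
    obtain gy where gy: "gy \<in> \<Phi> Y" "w \<in> gy" using H[OF w(3)] w(1) by blast
    obtain gz where gz: "gz \<in> \<Phi> Z" "w \<in> gz" using H[OF w(4)] w(2) by blast
    have "(restr ?G famrel)\<^sup>*\<^sup>* g1 gy" using step(3) w gy by blast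
    moreover have "(restr ?G famrel)\<^sup>*\<^sup>* gy gz" by (rule fam_step[OF _ _ gy(2) gz(2)]) (use gy gz w in auto)
    ultimately have 1: "(restr ?G famrel)\<^sup>*\<^sup>* g1 gz" by (rule rtranclp_trans)
    show ?case
    proof (intro impI ballI)
      fix g assume "g \<in> \<Phi> Z"
      then have "(restr (\<Phi> Z) famrel)\<^sup>*\<^sup>* gz g" using H[OF w(4)] gz unfolding cf_def2 by blast
      then have "(restr ?G famrel)\<^sup>*\<^sup>* gz g" by (rule restr_mono[rotated 2]) (use w in auto)
      then show "(restr ?G famrel)\<^sup>*\<^sup>* g1 g" using 1 by (rule rtranclp_trans[rotated])
    qed
  qed
  then show "(restr ?G famrel)\<^sup>*\<^sup>* g1 g2" using X by blast
qed


definition closedE :: "'a set set \<Rightarrow> 'a set \<Rightarrow> bool" where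
  "closedE E A \<longleftrightarrow> (\<exists>S. S \<subseteq> E \<and> S \<noteq> {} \<and> A = \<Inter>S)"

definition Inv :: "'a set set \<Rightarrow> 'a set set \<Rightarrow> 'a set \<Rightarrow> bool" where
  "Inv T E X \<longleftrightarrow> (\<exists>F. F \<noteq> {} \<and> connected_family F \<and> \<Union>F = X \<and>
      (\<forall>A\<in>F. A \<noteq> {} \<and> connected_on A (adj T) \<and> closedE E A))"

lemma closure_inv:
  assumes nc: "\<not> has_cycle T" and hE: "\<forall>e\<in>E. connected_on e (adj T)" and neE: "\<forall>e\<in>E. e \<noteq> {}"
    and X: "X \<in> comp_closure E"
  shows "Inv T E X"
  using X
proof (induct rule: comp_closure.induct)
  case (base e)
  have "connected_family {e}" unfolding cf_def2 by simp
  moreover have "closedE E e" unfolding closedE_def using base by (intro exI[of _ "{e}"]) auto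
  ultimately show ?case unfolding Inv_def using base hE neE by (intro exI[of _ "{e}"]) auto
next
  case (inter A B)
  obtain FA where FA: "FA \<noteq> {}" "connected_family FA" "\<Union>FA = A"
    "\<forall>a\<in>FA. a \<noteq> {} \<and> connected_on a (adj T) \<and> closedE E a"
    using inter(2) unfolding Inv_def by blast
  obtain FB where FB: "FB \<noteq> {}" "connected_family FB" "\<Union>FB = B"
    "\<forall>a\<in>FB. a \<noteq> {} \<and> connected_on a (adj T) \<and> closedE E a"
    using inter(4) unfolding Inv_def by blast
  define G where "G = {a \<inter> c | a c. a \<in> FA \<and> c \<in> FB \<and> a \<inter> c \<noteq> {}}"
  have UG: "\<Union>G = A \<inter> B" unfolding G_def using FA(3) FB(3) by blast
  have Gne: "G \<noteq> {}" using UG inter(5) by auto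
  have mem: "\<forall>g\<in>G. g \<noteq> {} \<and> connected_on g (adj T) \<and> closedE E g"
  proof
    fix g assume "g \<in> G"
    then obtain a c where ac: "g = a \<inter> c" "a \<in> FA" "c \<in> FB" "a \<inter> c \<noteq> {}" unfolding G_def by blast
    have "connected_on a (adj T)" "connected_on c (adj T)" using ac FA(4) FB(4) by auto
    then have "connected_on g (adj T)" unfolding ac(1) by (rule conn_inter[OF nc])
    moreover have "closedE E g"
    proof -
      have "closedE E a" using ac(2) FA(4) by blast
      then obtain Sa where "Sa \<subseteq> E" "Sa \<noteq> {}" "a = \<Inter>Sa" unfolding closedE_def by blast
      moreover have "closedE E c" using ac(3) FB(4) by blast
      then obtain Sc where "Sc \<subseteq> E" "Sc \<noteq> {}" "c = \<Inter>Sc" unfolding closedE_def by blast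
      ultimately show ?thesis unfolding closedE_def using ac(1)
        by (intro exI[of _ "Sa \<union> Sc"]) auto
    qed
    ultimately show "g \<noteq> {} \<and> connected_on g (adj T) \<and> closedE E g" using ac by simp
  qed
  have cA: "connected_on A (adj T)" using conn_union[OF FA(2)] FA(3,4) by blast
  have cB: "connected_on B (adj T)" using conn_union[OF FB(2)] FB(3,4) by blast
  have cAB: "connected_on (A \<inter> B) (adj T)" by (rule conn_inter[OF nc cA cB])
  have "connected_family G"
  proof (rule family_from_cover[OF cAB UG])
    show "\<forall>g\<in>G. g \<noteq> {}" using mem by blast
  next
    fix p q assume pq: "p \<in> A \<inter> B" "q \<in> A \<inter> B" "adj T p q"
    then have pq': "{p,q} \<in> T" "p \<noteq> q" unfolding adj_def by auto
    obtain a where a: "a \<in> FA" "p \<in> a" "q \<in> a"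
      using family_edge[OF nc FA(2) _ pq'] FA(3,4) pq by blast
    obtain c where c: "c \<in> FB" "p \<in> c" "q \<in> c"
      using family_edge[OF nc FB(2) _ pq'] FB(3,4) pq by blast
    have "a \<inter> c \<noteq> {}" using a c by blast
    then have "a \<inter> c \<in> G" unfolding G_def using a(1) c(1) by blast
    moreover have "p \<in> a \<inter> c \<and> q \<in> a \<inter> c" using a c by blast
    ultimately show "\<exists>g\<in>G. p \<in> g \<and> q \<in> g" by (rule bexI[rotated])
  qed
  then have cfG: "connected_family G" .
  show ?case unfolding Inv_def by (rule exI[of _ G]) (use Gne cfG UG mem in blast)
next
  case (union F)
  have IH: "\<And>X. X \<in> F \<Longrightarrow> Inv T E X" using union by blast
  have cfF: "connected_family F" using union by blast
  have Fne: "F \<noteq> {}" using union by blast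
  define \<Phi> where "\<Phi> = (\<lambda>X. SOME FX. FX \<noteq> {} \<and> connected_family FX \<and> \<Union>FX = X \<and>
      (\<forall>A\<in>FX. A \<noteq> {} \<and> connected_on A (adj T) \<and> closedE E A))"
  have Phi: "\<Phi> X \<noteq> {} \<and> connected_family (\<Phi> X) \<and> \<Union>(\<Phi> X) = X \<and>
      (\<forall>A\<in>\<Phi> X. A \<noteq> {} \<and> connected_on A (adj T) \<and> closedE E A)" if "X \<in> F" for X
  proof -
    have "Inv T E X" using IH[OF that] .
    then show ?thesis unfolding Inv_def \<Phi>_def by (rule someI_ex)
  qed
  define G where "G = (\<Union>X\<in>F. \<Phi> X)"
  have "connected_family G" unfolding G_def
    by (rule family_union[OF cfF]) (use Phi in blast)
  moreover have "\<Union>G = \<Union>F"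
  proof -
    have "\<Union>G = (\<Union>X\<in>F. \<Union>(\<Phi> X))" unfolding G_def by auto
    also have "\<dots> = (\<Union>X\<in>F. X)" using Phi by (intro SUP_cong) auto
    finally show ?thesis by simp
  qed
  moreover have "G \<noteq> {}"
  proof -
    obtain X where "X \<in> F" using Fne by blast
    then have "\<Phi> X \<noteq> {}" "\<Phi> X \<subseteq> G" using Phi unfolding G_def by auto
    then show ?thesis by blast
  qed
  moreover have "\<forall>A\<in>G. A \<noteq> {} \<and> connected_on A (adj T) \<and> closedE E A"
  proof
    fix A assume "A \<in> G"
    then obtain X where "X \<in> F" "A \<in> \<Phi> X" unfolding G_def by blast
    then show "A \<noteq> {} \<and> connected_on A (adj T) \<and> closedE E A" using Phi by blast
  qed
  ultimately show ?case unfolding Inv_def by (intro exI[of _ G]) blast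
qed

lemma closed_in_closure:
  assumes "finite E" "S \<subseteq> E" "S \<noteq> {}" "\<Inter>S \<noteq> {}"
  shows "\<Inter>S \<in> comp_closure E"
proof -
  have "finite S" using assms(1,2) finite_subset by blast
  then show ?thesis using assms(3,2,4)
  proof (induct rule: finite_ne_induct)
    case (singleton x) then show ?case by (auto intro: comp_closure.base)
  next
    case (insert x S)
    have "\<Inter>S \<in> comp_closure E" using insert by auto
    moreover have "x \<in> comp_closure E" using insert by (auto intro: comp_closure.base)
    ultimately show ?case using insert(6) comp_closure.inter[of x E "\<Inter>S"] by simp
  qed
qed


lemma restr_eq: "\<forall>e\<in>T. e \<subseteq> V \<Longrightarrow> restr V (adj T) = adj T"
  unfolding restr_def adj_def by (intro ext) blast

lemma choose_edge:
  assumes "rtrancl_path (adj T) a zs b" "distinct (a # zs)" "a \<in> C" "b \<notin> C"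
  shows "\<exists>x y. x \<in> C \<and> y \<notin> C \<and> adj T x y \<and> reach (T - {{x,y}}) a x \<and> reach (T - {{x,y}}) y b
          \<and> x \<in> set (a # zs) \<and> y \<in> set (a # zs)"
  using assms
proof (induct rule: rtrancl_path.induct)
  case (base x) then show ?case by simp
next
  case (step x' y' ys z)
  show ?case
  proof (cases "y' \<in> C")
    case False
    have "reach (T - {{x', y'}}) y' z"
      using avoid[OF step(2), of x' y'] step(4) by simp
    then show ?thesis using step(1,5) False by (intro exI[of _ x'] exI[of _ y']) (auto simp: reach_def)
  next
    case True
    obtain x y where xy: "x \<in> C" "y \<notin> C" "adj T x y" "reach (T - {{x,y}}) y' x" "reach (T - {{x,y}}) y z"
      "x \<in> set (y' # ys)" "y \<in> set (y' # ys)"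
      using step(3)[OF _ True step(6)] step(4) by auto
    have "x' \<notin> set (y' # ys)" using step(4) by simp
    then have "{x', y'} \<noteq> {x, y}" using xy(6,7) by (auto simp: doubleton_eq_iff)
    then have "adj (T - {{x,y}}) x' y'" using step(1) by (simp add: adj_minus)
    then have "reach (T - {{x,y}}) x' x" using xy(4) unfolding reach_def
      by (rule converse_rtranclp_into_rtranclp)
    then show ?thesis using xy by (intro exI[of _ x] exI[of _ y]) auto
  qed
qed

lemma add_edge_reach:
  assumes "reach (H \<union> {{u,v}}) p z"
  shows "reach H p z \<or> (reach H p u \<and> reach H v z) \<or> (reach H p v \<and> reach H u z)"
  using assms unfolding reach_def
proof (induct rule: rtranclp_induct)
  case base then show ?case by simp
next
  case (step z z')
  have "adj H z z' \<or> (z = u \<and> z' = v) \<or> (z = v \<and> z' = u)"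
    using step(2) unfolding adj_def by (auto simp: doubleton_eq_iff)
  then show ?case
  proof (elim disjE)
    assume "adj H z z'"
    then show ?thesis using step(3) by (meson rtranclp.rtrancl_into_rtrancl)
  next
    assume "z = u \<and> z' = v"
    then show ?thesis using step(3) by (meson rtranclp.rtrancl_refl rtranclp_trans)
  next
    assume "z = v \<and> z' = u"
    then show ?thesis using step(3) by (meson rtranclp.rtrancl_refl rtranclp_trans)
  qed
qed

lemma side_cover:
  assumes "reach T x a"
  shows "reach (T - {{x,y}}) x a \<or> reach (T - {{x,y}}) y a"
  using assms unfolding reach_def
proof (induct rule: rtranclp_induct)
  case base then show ?case by simp
next
  case (step b c)
  show ?case
  proof (cases "{b,c} = {x,y}")
    case True
    then have "c = x \<or> c = y" by (auto simp: doubleton_eq_iff)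
    then show ?thesis by auto
  next
    case False
    then have "adj (T - {{x,y}}) b c" using step(2) by (simp add: adj_minus)
    then show ?thesis using step(3) by (meson rtranclp.rtrancl_into_rtrancl)
  qed
qed

lemma surgery_tree:
  assumes tree: "is_tree V T" and e0: "adj T x y" and uv: "u \<in> V" "v \<in> V" "u \<noteq> v"
    and ux: "reach (T - {{x,y}}) u x" and vy: "reach (T - {{x,y}}) v y"
  shows "is_tree V (T - {{x,y}} \<union> {{u,v}})"
proof -
  define G where "G = T - {{x,y}}"
  define T' where "T' = G \<union> {{u,v}}"
  have nc: "\<not> has_cycle T" using tree unfolding is_tree_def by blast
  have TV: "\<forall>e\<in>T. e \<subseteq> V" using tree unfolding is_tree_def by blast
  have xyT: "{x,y} \<in> T" "x \<noteq> y" using e0 unfolding adj_def by auto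
  have brT: "\<not> reach G x y" unfolding G_def by (rule bridge[OF nc xyT])
  define P where "P = (\<lambda>z. reach G x z)"
  define Q where "Q = (\<lambda>z. reach G y z)"
  have Pu: "P u" unfolding P_def G_def using ux by (rule reach_sym)
  have Qv: "Q v" unfolding Q_def G_def using vy by (rule reach_sym)
  have disj: "\<not> (P z \<and> Q z)" for z
  proof
    assume "P z \<and> Q z"
    then have "reach G x z" "reach G z y" unfolding P_def Q_def using reach_sym by auto
    then have "reach G x y" by (rule reach_trans)
    then show False using brT by simp
  qed
  have GT': "G \<subseteq> T'" unfolding T'_def by auto
  have T'V: "\<forall>e\<in>T'. e \<subseteq> V \<and> card e = 2"
    using tree uv unfolding T'_def G_def is_tree_def by auto
  have conn: "connected_on V (adj T')"
  proof -
    have xa: "reach T' x a" if "a \<in> V" for a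
    proof -
      have "(restr V (adj T))\<^sup>*\<^sup>* x a" using tree that xyT TV unfolding is_tree_def conn_def2 by blast
      then have "reach T x a" unfolding restr_eq[OF TV] reach_def .
      then have "P a \<or> Q a" unfolding P_def Q_def G_def by (rule side_cover)
      then show ?thesis
      proof
        assume "P a" then show ?thesis unfolding P_def by (rule reach_mono[OF GT'])
      next
        assume "Q a"
        have r1: "reach T' x u" using Pu unfolding P_def by (rule reach_mono[OF GT'])
        have r2: "adj T' u v" unfolding T'_def adj_def using uv by auto
        have r3: "reach T' v y" using Qv unfolding Q_def by (rule reach_mono[OF GT' reach_sym])
        have r4: "reach T' y a" using \<open>Q a\<close> unfolding Q_def by (rule reach_mono[OF GT'])
        have "reach T' x v" using r1 r2 by (rule reach_step)
        then have "reach T' x y" using r3 by (rule reach_trans)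
        then show ?thesis using r4 by (rule reach_trans)
      qed
    qed
    have "\<forall>e\<in>T'. e \<subseteq> V" using T'V by blast
    then show ?thesis unfolding conn_def2 restr_eq[OF \<open>\<forall>e\<in>T'. e \<subseteq> V\<close>]
    proof (intro ballI)
      fix a b assume "a \<in> V" "b \<in> V"
      then have "reach T' a x" "reach T' x b" using xa reach_sym[OF xa] by auto
      then show "(adj T')\<^sup>*\<^sup>* a b" unfolding reach_def by (rule rtranclp_trans)
    qed
  qed
  have acyc: "\<not> has_cycle T'"
  proof (rule acyclic_if_bridges)
    fix p q assume pq: "{p,q} \<in> T'" "p \<noteq> q"
    show "\<not> reach (T' - {{p,q}}) p q"
    proof (cases "{p,q} = {u,v}")
      case True
      show ?thesis
      proof
        assume "reach (T' - {{p,q}}) p q"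
        moreover have "T' - {{p,q}} \<subseteq> G" unfolding T'_def using True by auto
        ultimately have r: "reach G p q" by (rule reach_mono[rotated])
        have "reach G u v" using True r reach_sym[OF r] by (auto simp: doubleton_eq_iff)
        then have "P v" using Pu unfolding P_def by (rule reach_trans[rotated])
        then show False using Qv disj by blast
      qed
    next
      case False
      then have pqG: "{p,q} \<in> G" using pq(1) unfolding T'_def by auto
      define H where "H = G - {{p,q}}"
      have eq: "T' - {{p,q}} = H \<union> {{u,v}}" unfolding T'_def H_def using False by auto
      have HG: "H \<subseteq> G" unfolding H_def by auto
      have adjG: "adj G p q" using pqG pq(2) unfolding adj_def by auto
      show ?thesis
      proof
        assume "reach (T' - {{p,q}}) p q"
        then have "reach H p q \<or> (reach H p u \<and> reach H v q) \<or> (reach H p v \<and> reach H u q)"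
          unfolding eq by (rule add_edge_reach)
        then show False
        proof (elim disjE conjE)
          assume "reach H p q"
          moreover have "H \<subseteq> T - {{p,q}}" unfolding H_def G_def by auto
          moreover have "{p,q} \<in> T" using pqG unfolding G_def by auto
          ultimately show False using bridge[OF nc _ pq(2)] reach_mono[of H "T - {{p,q}}" p q] by blast
        next
          assume a: "reach H p u" "reach H v q"
          have "reach G p u" "reach G v q" using a reach_mono[OF HG] by auto
          then have "P p" using reach_trans[OF Pu[unfolded P_def] reach_sym] unfolding P_def by blast
          then have "P q" using adjG unfolding P_def by (rule reach_step)
          moreover have "Q q" using Qv \<open>reach G v q\<close> unfolding Q_def by (rule reach_trans)
          ultimately show False using disj by blast
        next
          assume a: "reach H p v" "reach H u q"
          have "reach G p v" "reach G u q" using a reach_mono[OF HG] by auto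
          then have "Q p" using reach_trans[OF Qv[unfolded Q_def] reach_sym] unfolding Q_def by blast
          then have "Q q" using adjG unfolding Q_def by (rule reach_step)
          moreover have "P q" using Pu \<open>reach G u q\<close> unfolding P_def by (rule reach_trans)
          ultimately show False using disj by blast
        qed
      qed
    qed
  qed
  show ?thesis unfolding is_tree_def using tree conn acyc T'V unfolding is_tree_def T'_def G_def by blast
qed


lemma restr_adj_sym: "(restr S (adj G))\<^sup>*\<^sup>* x y \<Longrightarrow> (restr S (adj G))\<^sup>*\<^sup>* y x"
proof (rule restr_sym)
  fix a b assume "adj G a b" then show "adj G b a" by (rule adj_sym)
qed

lemma side_conn:
  assumes "G \<subseteq> T"
  shows "connected_on {z. reach G x z} (adj T)"
proof -
  let ?P = "{z. reach G x z}"
  have xz: "(restr ?P (adj T))\<^sup>*\<^sup>* x z" if "reach G x z" for z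
    using that unfolding reach_def
  proof (induct rule: rtranclp_induct)
    case base then show ?case by simp
  next
    case (step b c)
    have "restr {z. (adj G)\<^sup>*\<^sup>* x z} (adj T) b c" unfolding restr_def
      using step(1,2) assms adj_mono[OF assms step(2)] by (auto intro: rtranclp.rtrancl_into_rtrancl)
    then show ?case by (rule rtranclp.rtrancl_into_rtrancl[OF step(3)])
  qed
  show ?thesis unfolding conn_def2
  proof (intro ballI)
    fix a b assume "a \<in> ?P" "b \<in> ?P"
    then have "(restr ?P (adj T))\<^sup>*\<^sup>* x a" "(restr ?P (adj T))\<^sup>*\<^sup>* x b" using xz by auto
    then have "(restr ?P (adj T))\<^sup>*\<^sup>* a x" "(restr ?P (adj T))\<^sup>*\<^sup>* x b"
      using restr_adj_sym by auto
    then show "(restr ?P (adj T))\<^sup>*\<^sup>* a b" by (rule rtranclp_trans)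
  qed
qed

lemma surgery_host:
  assumes tree: "is_tree V T" and e0: "adj T x y"
    and ux: "reach (T - {{x,y}}) u x" and vy: "reach (T - {{x,y}}) v y"
    and conn: "connected_on e (adj T)" and uvne: "u \<noteq> v" and cond: "(u \<in> e \<and> v \<in> e) \<or> \<not> (x \<in> e \<and> y \<in> e)"
  shows "connected_on e (adj (T - {{x,y}} \<union> {{u,v}}))"
proof -
  define G where "G = T - {{x,y}}"
  define T' where "T' = G \<union> {{u,v}}"
  have nc: "\<not> has_cycle T" using tree unfolding is_tree_def by blast
  have xyT: "{x,y} \<in> T" "x \<noteq> y" using e0 unfolding adj_def by auto
  have brT: "\<not> reach G x y" unfolding G_def by (rule bridge[OF nc xyT])
  have GT: "G \<subseteq> T" unfolding G_def by auto
  have GT': "G \<subseteq> T'" unfolding T'_def by auto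
  have step': "adj T' a b" if "adj T a b" "{a,b} \<noteq> {x,y}" for a b
    using that unfolding T'_def G_def adj_def by auto
  have "connected_on e (adj T')"
  proof (cases "x \<in> e \<and> y \<in> e")
    case False
    show ?thesis unfolding conn_def2
    proof (intro ballI)
      fix a b assume "a \<in> e" "b \<in> e"
      then have ab: "(restr e (adj T))\<^sup>*\<^sup>* a b" using conn unfolding conn_def2 by blast
      have st: "adj T' c d" if "c \<in> e" "d \<in> e" "adj T c d" for c d
      proof -
        have "{c,d} \<noteq> {x,y}" using False that(1,2) by (auto simp: doubleton_eq_iff)
        then show "adj T' c d" using step' that(3) by blast
      qed
      show "(restr e (adj T'))\<^sup>*\<^sup>* a b" by (rule restr_mono[OF order_refl st ab])
    qed
  next
    case True
    then have uv: "u \<in> e" "v \<in> e" using cond by auto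
    define P where "P = {z. reach G x z}"
    define Q where "Q = {z. reach G y z}"
    have cP: "connected_on P (adj T)" unfolding P_def by (rule side_conn[OF GT])
    have cQ: "connected_on Q (adj T)" unfolding Q_def by (rule side_conn[OF GT])
    have yP: "y \<notin> P" unfolding P_def using brT by simp
    have xQ: "x \<notin> Q" unfolding Q_def using brT reach_sym[of G y x] by blast
    have uP: "u \<in> P" unfolding P_def mem_Collect_eq using ux unfolding G_def[symmetric] by (rule reach_sym)
    have vQ: "v \<in> Q" unfolding Q_def mem_Collect_eq using vy unfolding G_def[symmetric] by (rule reach_sym)
    have xP: "x \<in> P" unfolding P_def reach_def by simp
    have yQ: "y \<in> Q" unfolding Q_def reach_def by simp
    have ceP: "connected_on (e \<inter> P) (adj T)" by (rule conn_inter[OF nc conn cP])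
    have ceQ: "connected_on (e \<inter> Q) (adj T)" by (rule conn_inter[OF nc conn cQ])
    have p1: "(restr e (adj T'))\<^sup>*\<^sup>* x u"
    proof -
      have "(restr (e \<inter> P) (adj T))\<^sup>*\<^sup>* x u" using ceP True uv xP uP unfolding conn_def2 by blast
      then show ?thesis
      proof (rule restr_mono[rotated 2])
        fix c d assume "c \<in> e \<inter> P" "d \<in> e \<inter> P" "adj T c d"
        moreover have "{c,d} \<noteq> {x,y}" using yP \<open>c \<in> e \<inter> P\<close> \<open>d \<in> e \<inter> P\<close> by (auto simp: doubleton_eq_iff)
        ultimately show "adj T' c d" using step' by blast
      qed auto
    qed
    have p3: "(restr e (adj T'))\<^sup>*\<^sup>* v y"
    proof -
      have "(restr (e \<inter> Q) (adj T))\<^sup>*\<^sup>* v y" using ceQ True uv yQ vQ unfolding conn_def2 by blast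
      then show ?thesis
      proof (rule restr_mono[rotated 2])
        fix c d assume "c \<in> e \<inter> Q" "d \<in> e \<inter> Q" "adj T c d"
        moreover have "{c,d} \<noteq> {x,y}" using xQ \<open>c \<in> e \<inter> Q\<close> \<open>d \<in> e \<inter> Q\<close> by (auto simp: doubleton_eq_iff)
        ultimately show "adj T' c d" using step' by blast
      qed auto
    qed
    have p2: "restr e (adj T') u v"
      unfolding restr_def T'_def adj_def using uv uvne by auto
    have pxy: "(restr e (adj T'))\<^sup>*\<^sup>* x y"
    proof -
      have "(restr e (adj T'))\<^sup>*\<^sup>* x v" using p1 p2 by (rule rtranclp.rtrancl_into_rtrancl)
      then show ?thesis using p3 by (rule rtranclp_trans)
    qed
    have pyx: "(restr e (adj T'))\<^sup>*\<^sup>* y x" using pxy by (rule restr_adj_sym)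
    show ?thesis unfolding conn_def2
    proof (intro ballI)
      fix a b assume "a \<in> e" "b \<in> e"
      then have "(restr e (adj T))\<^sup>*\<^sup>* a b" using conn unfolding conn_def2 by blast
      then show "(restr e (adj T'))\<^sup>*\<^sup>* a b"
      proof (rule rtranclp_lift[rotated])
        fix c d assume cd: "restr e (adj T) c d"
        show "(restr e (adj T'))\<^sup>*\<^sup>* c d"
        proof (cases "{c,d} = {x,y}")
          case True
          then have "(c = x \<and> d = y) \<or> (c = y \<and> d = x)" by (auto simp: doubleton_eq_iff)
          then show ?thesis using pxy pyx by auto
        next
          case False
          then have "restr e (adj T') c d" using cd step' unfolding restr_def by blast
          then show ?thesis by simp
        qed
      qed
    qed
  qed
  then show ?thesis unfolding T'_def G_def .
qed


theorem mainTheorem12: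
  fixes V :: "'a set" and E :: "'a set set" and B :: "'a set" and u v :: 'a
  assumes "hypertree V E"
    and "basic_set V E B"
    and "u \<in> B" and "v \<in> B" and "u \<noteq> v"
  shows "(I_H V E {u, v} = B \<and> (\<exists>T. host_tree V E T \<and> {u, v} \<in> T))
         \<longleftrightarrow> \<not> same_component V (edges_not_containing E B) u v"
proof -
  obtain T0 where hyp: "hypergraph V E" and H0: "host_tree V E T0"
    using assms(1) unfolding hypertree_def by blast
  have finE: "finite E" and neE: "\<forall>e\<in>E. e \<noteq> {}" and EV: "\<forall>e\<in>E. e \<subseteq> V"
    using hyp unfolding hypergraph_def by auto
  have BComp: "B \<in> Comp V E" and cardB: "card B > 1"
    and nodec: "\<not> (\<exists>F. F \<subseteq> Comp V E \<and> (\<forall>X\<in>F. X \<subset> B) \<and> F \<noteq> {} \<and> connected_family F \<and> \<Union>F = B)"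
    using assms(2) unfolding basic_set_def by blast+
  have Bcases: "B = V \<or> (B \<in> comp_closure E \<and> B \<subset> V)"
  proof -
    have "B \<noteq> {x}" for x using cardB by auto
    then show ?thesis using BComp unfolding Comp_def by blast
  qed
  have BV: "B \<subseteq> V" using Bcases by blast
  have uV: "u \<in> V" and vV: "v \<in> V" using BV assms(3,4) by auto
  have tree0: "is_tree V T0" and hE0: "\<forall>e\<in>E. connected_on e (adj T0)"
    using H0 unfolding host_tree_def by auto
  have nc0: "\<not> has_cycle T0" using tree0 unfolding is_tree_def by blast
  have T0V: "\<forall>e\<in>T0. e \<subseteq> V" using tree0 unfolding is_tree_def by blast
  define E' where "E' = edges_not_containing E B"
  show ?thesis unfolding E'_def[symmetric]
  proof
    assume L: "I_H V E {u, v} = B \<and> (\<exists>T. host_tree V E T \<and> {u, v} \<in> T)"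
    then obtain T where HT: "host_tree V E T" and uvT: "{u,v} \<in> T" by blast
    have IB: "I_H V E {u, v} = B" using L by blast
    have nc: "\<not> has_cycle T" using HT unfolding host_tree_def is_tree_def by blast
    show "\<not> same_component V E' u v"
    proof
      assume sc: "same_component V E' u v"
      define P where "P = reach (T - {{u,v}}) u"
      have nPv: "\<not> P v" unfolding P_def by (rule bridge[OF nc uvT assms(5)])
      have Pu: "P u" unfolding P_def reach_def by simp
      obtain a b where ab: "a \<in> V \<and> b \<in> V \<and> two_section_adj E' a b" "P a" "\<not> P b"
        using cross[OF sc[unfolded same_component_def], of P] Pu nPv by blast
      then obtain e where e: "e \<in> E" "\<not> B \<subseteq> e" "a \<in> e" "b \<in> e"
        unfolding two_section_adj_def E'_def edges_not_containing_def by blast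
      have "(restr e (adj T))\<^sup>*\<^sup>* a b" using HT e unfolding host_tree_def conn_def2 by blast
      then have "u \<in> e \<and> v \<in> e" using ab(2,3) unfolding P_def by (rule crossing)
      then have ex: "e \<in> {e \<in> E. {u,v} \<subseteq> e}" using e(1) by blast
      then have "I_H V E {u,v} \<subseteq> e" unfolding I_H_def by auto
      then show False using IB e(2) by simp
    qed
  next
    assume R: "\<not> same_component V E' u v"
    have key: "B \<subseteq> e" if "e \<in> E" "u \<in> e" "v \<in> e" for e
    proof (rule ccontr)
      assume "\<not> B \<subseteq> e"
      then have "e \<in> E'" unfolding E'_def edges_not_containing_def using that(1) by blast
      then have "two_section_adj E' u v" unfolding two_section_adj_def using that assms(5) by blast
      then have "same_component V E' u v" unfolding same_component_def using uV vV by auto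
      then show False using R by blast
    qed
    have closedB: "B = V \<or> closedE E B"
    proof (cases "B = V")
      case True then show ?thesis by blast
    next
      case False
      then have Bc: "B \<in> comp_closure E" "B \<subset> V" using Bcases by auto
      have "Inv T0 E B" by (rule closure_inv[OF nc0 hE0 neE Bc(1)])
      then obtain F where F: "F \<noteq> {}" "connected_family F" "\<Union>F = B"
        "\<forall>A\<in>F. A \<noteq> {} \<and> connected_on A (adj T0) \<and> closedE E A"
        unfolding Inv_def by blast
      have "\<exists>A\<in>F. \<not> A \<subset> B"
      proof (rule ccontr)
        assume "\<not> (\<exists>A\<in>F. \<not> A \<subset> B)"
        then have sub: "\<forall>A\<in>F. A \<subset> B" by blast
        have "F \<subseteq> Comp V E"
        proof
          fix A assume "A \<in> F"
          then have "A \<noteq> {}" "closedE E A" using F(4) by auto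
          then obtain S where S: "S \<subseteq> E" "S \<noteq> {}" "A = \<Inter>S" "A \<noteq> {}"
            unfolding closedE_def by blast
          have "A \<in> comp_closure E" using closed_in_closure[OF finE S(1,2)] S(3,4) by simp
          moreover have "A \<subset> V" using sub \<open>A \<in> F\<close> Bc(2) by blast
          ultimately show "A \<in> Comp V E" unfolding Comp_def by blast
        qed
        then show False using nodec sub F(1,2,3) by blast
      qed
      then obtain A where "A \<in> F" "\<not> A \<subset> B" by blast
      moreover have "A \<subseteq> B" using \<open>A \<in> F\<close> F(3) by blast
      ultimately have "A = B" by blast
      then show ?thesis using F(4) \<open>A \<in> F\<close> by blast
    qed
    have I: "I_H V E {u, v} = B"
    proof (cases "\<exists>e\<in>E. {u,v} \<subseteq> e")
      case True
      have "\<Inter>{e \<in> E. {u,v} \<subseteq> e} = B"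
      proof
        show "B \<subseteq> \<Inter>{e \<in> E. {u,v} \<subseteq> e}" using key by blast
        show "\<Inter>{e \<in> E. {u,v} \<subseteq> e} \<subseteq> B"
          using closedB
        proof
          assume "B = V"
          then show ?thesis using True EV by blast
        next
          assume "closedE E B"
          then obtain S where S: "S \<subseteq> E" "S \<noteq> {}" "B = \<Inter>S" unfolding closedE_def by blast
          have "S \<subseteq> {e \<in> E. {u,v} \<subseteq> e}" using S assms(3,4) by blast
          then have "\<Inter>{e \<in> E. {u,v} \<subseteq> e} \<subseteq> \<Inter>S" by (rule Inter_anti_mono)
          then show ?thesis using S(3) by simp
        qed
      qed
      then show ?thesis unfolding I_H_def using True by simp
    next
      case False
      have "B = V"
        using closedB
      proof
        assume "closedE E B"
        then obtain S where S: "S \<subseteq> E" "S \<noteq> {}" "B = \<Inter>S" unfolding closedE_def by blast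
        then obtain s where "s \<in> S" by blast
        then have "{u,v} \<subseteq> s" "s \<in> E" using S assms(3,4) by blast+
        then show "B = V" using False by blast
      qed
      then show ?thesis unfolding I_H_def if_not_P[OF False] by simp
    qed
    have conn0: "(restr V (adj T0))\<^sup>*\<^sup>* u v" using tree0 uV vV unfolding is_tree_def conn_def2 by blast
    then have "reach T0 u v" unfolding restr_eq[OF T0V] reach_def .
    then obtain zs0 where "rtrancl_path (adj T0) u zs0 v"
      unfolding reach_def rtranclp_eq_rtrancl_path by blast
    then obtain zs where zs: "rtrancl_path (adj T0) u zs v" "distinct (u # zs)"
      by (rule rtrancl_path_distinct)
    define C where "C = {z. same_component V E' u z}"
    have uC: "u \<in> C" unfolding C_def same_component_def by simp
    have vC: "v \<notin> C" unfolding C_def using R by simp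
    obtain x y where xy: "x \<in> C" "y \<notin> C" "adj T0 x y" "reach (T0 - {{x,y}}) u x"
      "reach (T0 - {{x,y}}) y v"
      using choose_edge[OF zs uC vC] by blast
    have xyV: "x \<in> V" "y \<in> V" "x \<noteq> y" using xy(3) T0V unfolding adj_def by auto
    have cond: "(u \<in> e \<and> v \<in> e) \<or> \<not> (x \<in> e \<and> y \<in> e)" if "e \<in> E" for e
    proof (cases "B \<subseteq> e")
      case True then show ?thesis using assms(3,4) by blast
    next
      case False
      show ?thesis
      proof (rule disjI2, rule notI)
        assume xe: "x \<in> e \<and> y \<in> e"
        have "e \<in> E'" unfolding E'_def edges_not_containing_def using that False by blast
        then have "two_section_adj E' x y" unfolding two_section_adj_def using xe xyV by blast
        then have st: "(\<lambda>a b. a \<in> V \<and> b \<in> V \<and> two_section_adj E' a b) x y" using xyV by blast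
        have "same_component V E' u x" using xy(1) unfolding C_def by blast
        then have "same_component V E' u y" unfolding same_component_def
          using st by (rule rtranclp.rtrancl_into_rtrancl)
        then show False using xy(2) unfolding C_def by blast
      qed
    qed
    define T' where "T' = T0 - {{x,y}} \<union> {{u,v}}"
    have vy: "reach (T0 - {{x,y}}) v y" using xy(5) by (rule reach_sym)
    have "is_tree V T'" unfolding T'_def
      by (rule surgery_tree[OF tree0 xy(3) uV vV assms(5) xy(4) vy])
    moreover have "\<forall>e\<in>E. connected_on e (adj T')"
    proof
      fix e assume "e \<in> E"
      show "connected_on e (adj T')" unfolding T'_def
        by (rule surgery_host[OF tree0 xy(3) xy(4) vy _ assms(5) cond[OF \<open>e \<in> E\<close>]])
          (use hE0 \<open>e \<in> E\<close> in blast)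
    qed
    ultimately have "host_tree V E T'" unfolding host_tree_def by blast
    moreover have "{u,v} \<in> T'" unfolding T'_def by blast
    ultimately show "I_H V E {u, v} = B \<and> (\<exists>T. host_tree V E T \<and> {u, v} \<in> T)" using I by blast
  qed
qed

end
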